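(* Fix $\gamma\in(0,1]$, $0<\alpha<0.25$, $r\in\mathbb N$, $\epsilon>0$, and let $\xi>0$ be arbitrarily small. There exist $C>0$ and $N_0$ such that for all $N\ge N_0$ and all $s\in\mathcal S$ with $\|s-s^*\|^{2r}\le N^{-\epsilon}$, $$\Big|[J^{T}(s^* )]^{-1}(s-s^* )\cdot\big\langle s-s^*,\nabla^2 f(s^* )(s-s^* )\big\rangle\Big|\le \frac{C}{N^{\frac{3\epsilon}{2r}-2\alpha-3\xi}}.$$
   Context: Let $N\ge1$, $\lambda=1-\gamma/N^\alpha$, and $b=b(N)\ge1$ an integer with $b=O(\log N)$. $\mathcal S=\{s\in\mathbb R^b:1\ge s_1\ge\cdots\ge s_b\ge0\}$. The mean-field vector field is $f_k(s)=\lambda(s_{k-1}^2-s_k^2)-(s_k-s_{k+1})$, $k=1,\dots,b$, with $s_0=1,s_{b+1}=0$; $s^*$ is its unique equilibrium in $\mathcal S$. $J(s^* )$ is the $b\times b$ tridiagonal Jacobian of $f$ at $s^*$ with $J_{kk}=-2\lambda s^*_k-1$, $J_{k,k+1}=1$, $J_{k+1,k}=2\lambda s^*_k$. For $x\in\mathbb R^b$, $\langle x,\nabla^2f(s^* )x\rangle$ denotes the vector in $\mathbb R^b$ whose $i$-th entry is $x^T\nabla^2 f_i(s^* )x$, where $\nabla^2f_i$ is the Hessian of $f_i$ (its only nonzero entries are $(i,i)$ equal to $-2\lambda$ and $(i-1,i-1)$ equal to $2\lambda$). "$\cdot$" is the Euclidean inner product and $\|\cdot\|$ the Euclidean norm.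 *)

theory Defs
  imports "HOL-Analysis.Analysis" "HOL-Library.Landau_Symbols"
begin

text \<open>Vectors in R^b are represented as functions nat => real, with coordinates
  indexed by 1..b and all other values equal to 0.\<close>

definition lam :: "real \<Rightarrow> real \<Rightarrow> nat \<Rightarrow> real" where
  "lam \<gamma> \<alpha> N = 1 - \<gamma> / (real N powr \<alpha>)"

definition Sset :: "nat \<Rightarrow> (nat \<Rightarrow> real) set" where
  "Sset b = {s. (\<forall>k. k \<notin> {1..b} \<longrightarrow> s k = 0) \<and> s 1 \<le> 1 \<and> 0 \<le> s b
               \<and> (\<forall>k. 1 \<le> k \<and> k < b \<longrightarrow> s (Suc k) \<le> s k)}"

definition sext :: "nat \<Rightarrow> (nat \<Rightarrow> real) \<Rightarrow> nat \<Rightarrow> real" where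
  "sext b s k = (if k = 0 then 1 else if k \<le> b then s k else 0)"

definition fvec :: "real \<Rightarrow> nat \<Rightarrow> (nat \<Rightarrow> real) \<Rightarrow> nat \<Rightarrow> real" where
  "fvec l b s k = l * ((sext b s (k - 1))\<^sup>2 - (sext b s k)\<^sup>2) - (sext b s k - sext b s (Suc k))"

definition equilibrium :: "real \<Rightarrow> nat \<Rightarrow> (nat \<Rightarrow> real) \<Rightarrow> bool" where
  "equilibrium l b s \<longleftrightarrow> s \<in> Sset b \<and> (\<forall>k\<in>{1..b}. fvec l b s k = 0)"

definition sstar :: "real \<Rightarrow> nat \<Rightarrow> nat \<Rightarrow> real" where
  "sstar l b = (THE s. equilibrium l b s)"

definition Jac :: "real \<Rightarrow> nat \<Rightarrow> nat \<Rightarrow> nat \<Rightarrow> real" where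
  "Jac l b i j =
     (if i \<in> {1..b} \<and> j \<in> {1..b} then
        (if i = j then - 2 * l * sstar l b i - 1
         else if j = Suc i then 1
         else if i = Suc j then 2 * l * sstar l b j
         else 0)
      else 0)"

definition invJT :: "real \<Rightarrow> nat \<Rightarrow> (nat \<Rightarrow> real) \<Rightarrow> nat \<Rightarrow> real" where
  "invJT l b x = (THE y. (\<forall>k. k \<notin> {1..b} \<longrightarrow> y k = 0) \<and>
        (\<forall>i\<in>{1..b}. (\<Sum>j=1..b. Jac l b j i * y j) = x i))"

definition hess :: "real \<Rightarrow> nat \<Rightarrow> nat \<Rightarrow> nat \<Rightarrow> real" where
  "hess l i j k = (if j = k \<and> j = i then - 2 * l
                   else if j = k \<and> Suc j = i \<and> 1 \<le> j then 2 * l else 0)"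

definition hessform :: "real \<Rightarrow> nat \<Rightarrow> (nat \<Rightarrow> real) \<Rightarrow> nat \<Rightarrow> real" where
  "hessform l b x i = (if i \<in> {1..b} then (\<Sum>j=1..b. \<Sum>k=1..b. x j * hess l i j k * x k) else 0)"

definition dotb :: "nat \<Rightarrow> (nat \<Rightarrow> real) \<Rightarrow> (nat \<Rightarrow> real) \<Rightarrow> real" where
  "dotb b x y = (\<Sum>k=1..b. x k * y k)"

definition normb :: "nat \<Rightarrow> (nat \<Rightarrow> real) \<Rightarrow> real" where
  "normb b x = sqrt (\<Sum>k=1..b. (x k)\<^sup>2)"

end

theory Submission
  imports Defs "HOL-Real_Asymp.Real_Asymp"
begin


lemma asym_b:
  fixes b :: "nat \<Rightarrow> nat" and e :: real
  assumes "(\<lambda>N. real (b N)) \<in> O(\<lambda>N. ln (real N))" "0 < e"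
  shows "\<exists>N1. \<forall>N\<ge>N1. real (b N) ^ 2 \<le> real N powr e"
proof -
  from assms(1) obtain c where c: "c > 0" "eventually (\<lambda>N. norm (real (b N)) \<le> c * norm (ln (real N))) at_top"
    by (elim landau_o.bigE)
  have "eventually (\<lambda>x::real. (c * ln x)^2 \<le> x powr e) at_top"
    using c(1) assms(2) by real_asymp
  hence "eventually (\<lambda>N::nat. (c * ln (real N))^2 \<le> real N powr e) at_top"
    using filterlim_real_sequentially eventually_compose_filterlim by blast
  moreover have "eventually (\<lambda>N::nat. N \<ge> 1) at_top" by (simp add: eventually_ge_at_top)
  ultimately have "eventually (\<lambda>N. real (b N) ^ 2 \<le> real N powr e) at_top"
    using c(2)
  proof eventually_elim
    case (elim N)
    have "ln (real N) \<ge> 0" using elim by simp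
    hence "real (b N) \<le> c * ln (real N)" using elim by simp
    hence "real (b N) ^ 2 \<le> (c * ln (real N))^2" by (intro power_mono) auto
    thus ?case using elim by linarith
  qed
  thus ?thesis by (simp add: eventually_at_top_linorder)
qed


fun Dn :: "real \<Rightarrow> real \<Rightarrow> nat \<Rightarrow> real" where
  "Dn l u 0 = u"
| "Dn l u (Suc m) = sqrt (Dn l u m / l + u\<^sup>2)"

lemma Dn_nonneg: "0 \<le> u \<Longrightarrow> 0 < l \<Longrightarrow> 0 \<le> Dn l u m"
  by (induction m) auto

lemma Dn_sq: "0 \<le> u \<Longrightarrow> 0 < l \<Longrightarrow> (Dn l u (Suc m))\<^sup>2 = Dn l u m / l + u\<^sup>2"
  using Dn_nonneg[of u l m] by simp

lemma Dn_strict: "0 \<le> u \<Longrightarrow> u < v \<Longrightarrow> 0 < l \<Longrightarrow> Dn l u m < Dn l v m"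
proof (induction m)
  case 0 then show ?case by simp
next
  case (Suc m)
  have "u\<^sup>2 < v\<^sup>2" using Suc by (intro power_strict_mono) auto
  moreover have "Dn l u m / l < Dn l v m / l" using Suc by (simp add: divide_strict_right_mono)
  ultimately show ?case by simp
qed

lemma Dn_cont: "0 < l \<Longrightarrow> isCont (\<lambda>u. Dn l u m) u"
  by (induction m) (auto intro!: continuous_intros)

lemma Dn_zero: "Dn l 0 m = 0"
  by (induction m) auto

lemma Dn_one: "0 < l \<Longrightarrow> 1 \<le> Dn l 1 m"
proof (induction m)
  case 0 then show ?case by simp
next
  case (Suc m)
  have "0 \<le> Dn l 1 m / l" using Dn_nonneg[of 1 l m] Suc by simp
  then show ?case by simp
qed

lemma Dn_gt1: "0 \<le> u \<Longrightarrow> 0 < l \<Longrightarrow> l \<le> 1 \<Longrightarrow> 1 < Dn l u m \<Longrightarrow> m \<le> n \<Longrightarrow> 1 < Dn l u n"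
proof (induction n)
  case 0 then show ?case by simp
next
  case (Suc n)
  show ?case
  proof (cases "m = Suc n")
    case True then show ?thesis using Suc by simp
  next
    case False
    hence h: "1 < Dn l u n" using Suc by simp
    have "Dn l u n \<le> Dn l u n / l" using Suc h by (simp add: le_divide_eq)
    hence "1 < Dn l u n / l + u\<^sup>2" using h by (smt (verit) zero_le_power2)
    then show ?thesis by simp
  qed
qed

lemma Dn_le1: "0 \<le> u \<Longrightarrow> 0 < l \<Longrightarrow> l \<le> 1 \<Longrightarrow> Dn l u n \<le> 1 \<Longrightarrow> m \<le> n \<Longrightarrow> Dn l u m \<le> 1"
  using Dn_gt1 by force

lemma Dn_mono: "0 \<le> u \<Longrightarrow> 0 < l \<Longrightarrow> l \<le> 1 \<Longrightarrow> Dn l u m \<le> 1 \<Longrightarrow> Dn l u m \<le> Dn l u (Suc m)"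
proof -
  assume a: "0 \<le> u" "0 < l" "l \<le> 1" "Dn l u m \<le> 1"
  have n: "0 \<le> Dn l u m" using Dn_nonneg a by auto
  have "(Dn l u m)\<^sup>2 \<le> Dn l u m" using n a by (simp add: power2_eq_square mult_left_le)
  also have "\<dots> \<le> Dn l u m / l" using a n by (simp add: le_divide_eq mult_left_le)
  also have "\<dots> \<le> Dn l u m / l + u\<^sup>2" by simp
  finally have "(Dn l u m)\<^sup>2 \<le> Dn l u m / l + u\<^sup>2" .
  hence "Dn l u m \<le> sqrt (Dn l u m / l + u\<^sup>2)" by (rule real_le_rsqrt)
  thus ?thesis by simp
qed

definition Tq :: "real \<Rightarrow> nat \<Rightarrow> (nat \<Rightarrow> real) \<Rightarrow> nat \<Rightarrow> real" where
  "Tq l b s k = l * ((sext b s (k - 1))\<^sup>2 - (sext b s b)\<^sup>2) - sext b s k"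

lemma fvec_T1: "1 \<le> k \<Longrightarrow> k < b \<Longrightarrow> fvec l b s k = Tq l b s k - Tq l b s (Suc k)"
  unfolding fvec_def Tq_def by (simp add: algebra_simps)

lemma fvec_Tb: "1 \<le> b \<Longrightarrow> fvec l b s b = Tq l b s b"
  unfolding fvec_def Tq_def by (simp add: sext_def)

lemma eq_T:
  assumes "1 \<le> b" "\<forall>k\<in>{1..b}. fvec l b s k = 0"
  shows "\<forall>k\<in>{1..b}. Tq l b s k = 0"
proof -
  have "\<forall>m<b. Tq l b s (b - m) = 0"
  proof (intro allI impI)
    fix m assume "m < b"
    then show "Tq l b s (b - m) = 0"
    proof (induction m)
      case 0 then show ?case using assms fvec_Tb[of b l s] by auto
    next
      case (Suc m)
      have k: "1 \<le> b - Suc m" "b - Suc m < b" using Suc by auto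
      have "Suc (b - Suc m) = b - m" using Suc by auto
      then show ?case using fvec_T1[OF k, of l s] assms Suc k by auto
    qed
  qed
  show ?thesis
  proof
    fix k assume k: "k \<in> {1..b}"
    hence "b - k < b" "b - (b - k) = k" by auto
    thus "Tq l b s k = 0" using \<open>\<forall>m<b. Tq l b s (b - m) = 0\<close> by metis
  qed
qed

lemma T_eq:
  assumes "1 \<le> b" "\<forall>k\<in>{1..b}. Tq l b s k = 0"
  shows "\<forall>k\<in>{1..b}. fvec l b s k = 0"
proof
  fix k assume k: "k \<in> {1..b}"
  show "fvec l b s k = 0"
  proof (cases "k = b")
    case True then show ?thesis using assms fvec_Tb by auto
  next
    case False
    then show ?thesis using fvec_T1[of k b l s] assms k by auto
  qed
qed

lemma Sset_nonneg: "s \<in> Sset b \<Longrightarrow> k \<in> {1..b} \<Longrightarrow> 0 \<le> s k"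
proof -
  assume s: "s \<in> Sset b" and k: "k \<in> {1..b}"
  have "\<forall>m. m \<le> b - 1 \<longrightarrow> 0 \<le> s (b - m)"
  proof (intro allI)
    fix m show "m \<le> b - 1 \<longrightarrow> 0 \<le> s (b - m)"
    proof (induction m)
      case 0 then show ?case using s by (simp add: Sset_def)
    next
      case (Suc m)
      show ?case
      proof
        assume "Suc m \<le> b - 1"
        hence "1 \<le> b - Suc m" "b - Suc m < b" "Suc (b - Suc m) = b - m" by auto
        then show "0 \<le> s (b - Suc m)" using Suc s unfolding Sset_def by force
      qed
    qed
  qed
  moreover have "b - k \<le> b - 1" "b - (b - k) = k" using k by auto
  ultimately show ?thesis by metis
qed

lemma Sset_le1: "s \<in> Sset b \<Longrightarrow> k \<in> {1..b} \<Longrightarrow> s k \<le> 1"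
proof -
  assume s: "s \<in> Sset b" and k: "k \<in> {1..b}"
  have "\<forall>k. k \<in> {1..b} \<longrightarrow> s k \<le> 1"
  proof (intro allI)
    fix k show "k \<in> {1..b} \<longrightarrow> s k \<le> 1"
    proof (induction k)
      case 0 then show ?case by simp
    next
      case (Suc k)
      show ?case
      proof
        assume a: "Suc k \<in> {1..b}"
        show "s (Suc k) \<le> 1"
        proof (cases "k = 0")
          case True then show ?thesis using s by (simp add: Sset_def)
        next
          case False
          then have "s (Suc k) \<le> s k" using s a unfolding Sset_def by auto
          then show ?thesis using Suc a False by auto
        qed
      qed
    qed
  qed
  then show ?thesis using k by blast
qed

lemma eq_unique_form:
  assumes "1 \<le> b" "0 < l" "equilibrium l b s"
  shows "\<forall>k\<le>b. sext b s k = Dn l (s b) (b - k)"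
proof -
  have s: "s \<in> Sset b" and T: "\<forall>k\<in>{1..b}. Tq l b s k = 0"
    using assms eq_T unfolding equilibrium_def by auto
  have ub: "0 \<le> s b" using s by (simp add: Sset_def)
  have "\<forall>m\<le>b. sext b s (b - m) = Dn l (s b) m"
  proof (intro allI impI)
    fix m assume "m \<le> b"
    then show "sext b s (b - m) = Dn l (s b) m"
    proof (induction m)
      case 0 then show ?case using assms by (simp add: sext_def)
    next
      case (Suc m)
      let ?k = "b - m"
      have k: "?k \<in> {1..b}" using Suc by auto
      have km: "?k - 1 = b - Suc m" by auto
      have t: "l * ((sext b s (?k - 1))\<^sup>2 - (sext b s b)\<^sup>2) - sext b s ?k = 0"
        using T k unfolding Tq_def by blast
      have sb: "sext b s b = s b" using assms by (simp add: sext_def)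
      have "(sext b s (?k - 1))\<^sup>2 = sext b s ?k / l + (s b)\<^sup>2"
        using t sb assms(2) by (simp add: field_simps)
      hence e: "(sext b s (b - Suc m))\<^sup>2 = Dn l (s b) m / l + (s b)\<^sup>2"
        using Suc km by simp
      have nn: "0 \<le> sext b s (b - Suc m)"
        using Sset_nonneg[OF s] by (simp add: sext_def)
      have "sext b s (b - Suc m) = sqrt ((sext b s (b - Suc m))\<^sup>2)" using nn by simp
      also have "\<dots> = Dn l (s b) (Suc m)" using e by simp
      finally show ?case .
    qed
  qed
  show ?thesis
  proof (intro allI impI)
    fix k assume k: "k \<le> b"
    hence "b - k \<le> b" "b - (b - k) = k" by auto
    thus "sext b s k = Dn l (s b) (b - k)" using \<open>\<forall>m\<le>b. sext b s (b - m) = Dn l (s b) m\<close> by metis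
  qed
qed

lemma equilibrium_exists:
  assumes "1 \<le> b" "0 < l" "l \<le> 1"
  shows "\<exists>s. equilibrium l b s"
proof -
  have "\<exists>u\<ge>0. u \<le> 1 \<and> Dn l u b = 1"
    using IVT[of "\<lambda>u. Dn l u b" 0 1 1] Dn_zero Dn_one[OF assms(2)] Dn_cont[OF assms(2)] by auto
  then obtain u where u: "0 \<le> u" "u \<le> 1" "Dn l u b = 1" by blast
  define s where "s k = (if k \<in> {1..b} then Dn l u (b - k) else 0)" for k
  have se: "sext b s k = Dn l u (b - k)" if "k \<le> b" for k
    using that u by (auto simp: sext_def s_def)
  have le1: "Dn l u m \<le> 1" if "m \<le> b" for m using Dn_le1[OF u(1) assms(2,3), of b m] u that by simp
  have "s \<in> Sset b"
    unfolding Sset_def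
  proof (intro CollectI conjI allI impI)
    show "s 1 \<le> 1" using le1 by (simp add: s_def)
    show "0 \<le> s b" using u assms by (simp add: s_def)
    fix k
    show "k \<notin> {1..b} \<Longrightarrow> s k = 0" by (auto simp: s_def)
    assume k: "1 \<le> k \<and> k < b"
    hence "b - k = Suc (b - Suc k)" by auto
    then show "s (Suc k) \<le> s k" using k Dn_mono[OF u(1) assms(2,3) le1[of "b - Suc k"]]
      by (simp add: s_def)
  qed
  moreover have "\<forall>k\<in>{1..b}. Tq l b s k = 0"
  proof
    fix k assume k: "k \<in> {1..b}"
    have "b - (k - 1) = Suc (b - k)" using k by auto
    hence "(sext b s (k - 1))\<^sup>2 = Dn l u (b - k) / l + u\<^sup>2"
      using se[of "k-1"] k Dn_sq[OF u(1) assms(2)] by auto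
    moreover have "sext b s b = u" using se[of b] by simp
    moreover have "sext b s k = Dn l u (b - k)" using se k by auto
    ultimately show "Tq l b s k = 0" unfolding Tq_def using assms(2) by (simp add: field_simps)
  qed
  ultimately show ?thesis using T_eq assms unfolding equilibrium_def by blast
qed

lemma equilibrium_unique:
  assumes "1 \<le> b" "0 < l" "equilibrium l b s" "equilibrium l b s'"
  shows "s = s'"
proof -
  have f: "\<forall>k\<le>b. sext b s k = Dn l (s b) (b - k)" "\<forall>k\<le>b. sext b s' k = Dn l (s' b) (b - k)"
    using eq_unique_form assms by auto
  have u: "0 \<le> s b" "0 \<le> s' b" using assms unfolding equilibrium_def Sset_def by auto
  have "Dn l (s b) b = Dn l (s' b) b" using f(1)[rule_format, of 0] f(2)[rule_format, of 0]
    by (simp add: sext_def)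
  hence "s b = s' b" using Dn_strict[of "s b" "s' b" l b] Dn_strict[of "s' b" "s b" l b] u assms(2)
    by (metis linorder_neq_iff order_less_irrefl)
  show ?thesis
  proof
    fix k
    show "s k = s' k"
    proof (cases "k \<in> {1..b}")
      case True
      have "sext b s k = s k" "sext b s' k = s' k" using True by (auto simp: sext_def)
      then show ?thesis using f True \<open>s b = s' b\<close> by force
    next
      case False
      then show ?thesis using assms unfolding equilibrium_def Sset_def by auto
    qed
  qed
qed

lemma sstar_eq:
  assumes "1 \<le> b" "0 < l" "l \<le> 1"
  shows "equilibrium l b (sstar l b)"
  unfolding sstar_def
  using equilibrium_exists[OF assms] equilibrium_unique[OF assms(1,2)] by (metis theI)



definition Aop :: "(nat \<Rightarrow> real) \<Rightarrow> (nat \<Rightarrow> real) \<Rightarrow> nat \<Rightarrow> real" where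
  "Aop p z i = (z i - z (i - 1)) + p i * (z i - z (Suc i))"

lemma comparison:
  assumes p: "\<forall>i\<in>{1..b}. 0 \<le> p i" and z0: "0 \<le> z 0" and zb: "0 \<le> z (Suc b)"
    and A: "\<forall>i\<in>{1..b}. 0 \<le> Aop p z i"
  shows "\<forall>i\<in>{1..b}. 0 \<le> z i"
proof (rule ccontr)
  assume "\<not> (\<forall>i\<in>{1..b}. 0 \<le> z i)"
  then obtain i where i: "i \<in> {1..b}" "z i < 0" by auto
  have ne: "{1..b} \<noteq> {}" using i by auto
  have "Min (z ` {1..b}) \<in> z ` {1..b}" using ne by (intro Min_in) auto
  then obtain i1 where i1: "i1 \<in> {1..b}" "z i1 = Min (z ` {1..b})" by auto
  define M where "M = {i\<in>{1..b}. \<forall>j\<in>{1..b}. z i \<le> z j}"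
  have i1M: "i1 \<in> M" unfolding M_def using i1 by auto
  have fM: "finite M" unfolding M_def by auto
  define m where "m = Min M"
  have mM: "m \<in> M" unfolding m_def using fM i1M by (intro Min_in) auto
  have mle: "\<And>j. j \<in> M \<Longrightarrow> m \<le> j" unfolding m_def using fM by auto
  have mr: "m \<in> {1..b}" and mmin: "\<forall>j\<in>{1..b}. z m \<le> z j" using mM unfolding M_def by auto
  have zm: "z m < 0" using mmin i by force
  have left: "z m < z (m - 1)"
  proof (cases "m = 1")
    case True then show ?thesis using z0 zm by simp
  next
    case False
    hence r: "m - 1 \<in> {1..b}" using mr by auto
    have "m - 1 \<notin> M" using mle[of "m - 1"] False mr by fastforce
    hence "\<not> (\<forall>j\<in>{1..b}. z (m - 1) \<le> z j)" using r unfolding M_def by auto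
    then obtain j where "j \<in> {1..b}" "z j < z (m - 1)" by auto
    then show ?thesis using mmin by force
  qed
  have right: "z m \<le> z (Suc m)"
  proof (cases "m = b")
    case True then show ?thesis using zb zm by simp
  next
    case False
    hence "Suc m \<in> {1..b}" using mr by auto
    then show ?thesis using mmin by auto
  qed
  have "p m * (z m - z (Suc m)) \<le> 0" using p mr right by (simp add: mult_nonneg_nonpos)
  hence "Aop p z m < 0" unfolding Aop_def using left by linarith
  thus False using A mr by force
qed

lemma Aop_lin: "Aop p (\<lambda>i. c * w i + e * y i) i = c * Aop p w i + e * Aop p y i"
  unfolding Aop_def by (simp add: algebra_simps)

lemma supersol:
  fixes t :: "nat \<Rightarrow> real" and b :: nat
  assumes t: "\<forall>k\<in>{1..b}. 0 \<le> t k \<and> t k \<le> 1"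
  defines "Q \<equiv> \<lambda>i. \<Prod>k\<in>{i..b}. (1 + t k)"
  defines "Dl \<equiv> \<lambda>i. real (Suc b - i) * Q i"
  defines "w \<equiv> \<lambda>i. if i \<in> {1..b} then (\<Sum>m\<in>{1..i}. Dl m) else 0"
  shows "\<forall>i\<in>{1..b}. 1 \<le> Aop (\<lambda>k. 2 * t k) w i"
    and "\<forall>i. 0 \<le> w i" and "\<forall>i. w i \<le> real b ^ 2 * Q 1" and "w 0 = 0" and "w (Suc b) = 0"
proof -
  have Q1: "1 \<le> Q i" if "1 \<le> i" for i
    unfolding Q_def using t that by (intro prod_ge_1) auto
  have Qs: "Q i = (1 + t i) * Q (Suc i)" if "i \<le> b" for i
    unfolding Q_def using that by (simp add: prod.atLeast_Suc_atMost)
  have QleQ1: "Q i \<le> Q 1" if "1 \<le> i" "i \<le> b" for i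
  proof -
    have "{1..b} = {1..<i} \<union> {i..b}" using that by auto
    hence "Q 1 = (\<Prod>k\<in>{1..<i}. (1 + t k)) * Q i" unfolding Q_def
      by (simp add: prod.union_disjoint[symmetric] ivl_disj_int)
    moreover have "1 \<le> (\<Prod>k\<in>{1..<i}. (1 + t k))" using t that by (intro prod_ge_1) auto
    moreover have "0 \<le> Q i" using Q1 that by force
    ultimately show ?thesis by (simp add: mult_le_cancel_right1)
  qed
  have Dl0: "0 \<le> Dl i" if "1 \<le> i" for i unfolding Dl_def using Q1[OF that] by simp
  have Dlb: "Dl i \<le> real b * Q 1" if "1 \<le> i" "i \<le> b" for i
  proof -
    have "Dl i \<le> real b * Q i" unfolding Dl_def using that Q1[of i]
      by (intro mult_right_mono) auto
    also have "\<dots> \<le> real b * Q 1" using QleQ1[OF that] by (intro mult_left_mono) auto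
    finally show ?thesis .
  qed
  show w0: "\<forall>i. 0 \<le> w i" unfolding w_def using Dl0 by (auto intro!: sum_nonneg)
  show "\<forall>i. w i \<le> real b ^ 2 * Q 1"
  proof
    fix i
    show "w i \<le> real b ^ 2 * Q 1"
    proof (cases "i \<in> {1..b}")
      case True
      have "w i = (\<Sum>m\<in>{1..i}. Dl m)" using True unfolding w_def by simp
      also have "\<dots> \<le> (\<Sum>m\<in>{1..i}. real b * Q 1)" using True Dlb by (intro sum_mono) auto
      also have "\<dots> = real i * (real b * Q 1)" by simp
      also have "\<dots> \<le> real b * (real b * Q 1)" using True Q1[of 1] by (intro mult_right_mono) auto
      finally show ?thesis by (simp add: power2_eq_square)
    next
      case False
      then have "w i = 0" unfolding w_def by auto
      then show ?thesis using Q1[of 1] by simp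
    qed
  qed
  show "w 0 = 0" "w (Suc b) = 0" unfolding w_def by auto
  show "\<forall>i\<in>{1..b}. 1 \<le> Aop (\<lambda>k. 2 * t k) w i"
  proof
    fix i assume i: "i \<in> {1..b}"
    have l: "w i - w (i - 1) = Dl i"
    proof (cases "i = 1")
      case True then show ?thesis unfolding w_def using i by simp
    next
      case False
      hence "{1..i} = insert i {1..i-1}" "i \<notin> {1..i-1}" using i by auto
      then show ?thesis unfolding w_def using i False by simp
    qed
    show "1 \<le> Aop (\<lambda>k. 2 * t k) w i"
    proof (cases "i = b")
      case True
      have "0 \<le> 2 * t i * (w i - w (Suc i))" using t i w0 True \<open>w (Suc b) = 0\<close> by simp
      moreover have "Dl i = Q b" unfolding Dl_def using True by simp
      moreover have "1 \<le> Q b" using Q1 i by auto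
      ultimately show ?thesis unfolding Aop_def using l True by simp
    next
      case False
      hence i2: "Suc i \<in> {1..b}" using i by auto
      have r: "w (Suc i) - w i = Dl (Suc i)" unfolding w_def using i i2 by simp
      have e: "Aop (\<lambda>k. 2 * t k) w i = Dl i - 2 * t i * Dl (Suc i)"
        unfolding Aop_def using l r by (simp add: algebra_simps)
      have bi: "real (Suc b - i) = real (Suc b - Suc i) + 1" using i2 by auto
      have Qi: "Q i = (1 + t i) * Q (Suc i)" using Qs i by auto
      have q0: "0 \<le> real (Suc b - Suc i) * Q (Suc i)" using Q1[of "Suc i"] by simp
      have "2 * t i * Dl (Suc i) \<le> (1 + t i) * Dl (Suc i)"
        unfolding Dl_def using t i q0 by (intro mult_right_mono) auto
      moreover have "Dl i = (1 + t i) * Dl (Suc i) + Q i"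
        unfolding Dl_def using bi Qi by (simp add: algebra_simps)
      ultimately have "Q i \<le> Aop (\<lambda>k. 2 * t k) w i" using e by linarith
      then show ?thesis using Q1 i by force
    qed
  qed
qed

lemma Qbound:
  fixes t :: "nat \<Rightarrow> real" and l :: real
  assumes t: "\<forall>k\<in>{1..b}. 0 \<le> t k \<and> t k \<le> 1" and t0: "t 0 = l"
    and rec: "\<forall>k\<in>{1..b}. t k \<le> (t (k - 1))\<^sup>2"
  shows "(1 - l\<^sup>2) * (\<Prod>k\<in>{1..b}. (1 + t k)) \<le> 1 - (t b)\<^sup>2"
proof -
  have "\<forall>j\<le>b. (1 - l\<^sup>2) * (\<Prod>k\<in>{1..j}. (1 + t k)) \<le> 1 - (t j)\<^sup>2"
  proof (intro allI impI)
    fix j assume "j \<le> b"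
    then show "(1 - l\<^sup>2) * (\<Prod>k\<in>{1..j}. (1 + t k)) \<le> 1 - (t j)\<^sup>2"
    proof (induction j)
      case 0 then show ?case using t0 by simp
    next
      case (Suc j)
      have tj: "0 \<le> t (Suc j)" "t (Suc j) \<le> 1" "t (Suc j) \<le> (t j)\<^sup>2" using t Suc rec[rule_format, of "Suc j"] by auto
      have "(1 - l\<^sup>2) * (\<Prod>k\<in>{1..Suc j}. (1 + t k)) = ((1 - l\<^sup>2) * (\<Prod>k\<in>{1..j}. (1 + t k))) * (1 + t (Suc j))"
        by (simp add: prod.nat_ivl_Suc' algebra_simps)
      also have "\<dots> \<le> (1 - (t j)\<^sup>2) * (1 + t (Suc j))"
        using Suc tj by (intro mult_right_mono) auto
      also have "\<dots> \<le> (1 - t (Suc j)) * (1 + t (Suc j))"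
        using tj by (intro mult_right_mono) auto
      also have "\<dots> = 1 - (t (Suc j))\<^sup>2" by (simp add: algebra_simps power2_eq_square)
      finally show ?case .
    qed
  qed
  then show ?thesis by simp
qed



fun Ysh :: "(nat \<Rightarrow> real) \<Rightarrow> (nat \<Rightarrow> real) \<Rightarrow> nat \<Rightarrow> real \<Rightarrow> nat \<Rightarrow> real" where
  "Ysh p x b t 0 = 0"
| "Ysh p x b t (Suc 0) = t"
| "Ysh p x b t (Suc (Suc m)) = x (b - m) + (p (b - m) + 1) * Ysh p x b t (Suc m) - p (b - m) * Ysh p x b t m"

lemma Ysh_lin: "Ysh p x b t m = Ysh p x b 0 m + t * Ysh p (\<lambda>_. 0) b 1 m"
  by (induction p x b t m rule: Ysh.induct) (simp_all add: algebra_simps)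

lemma Ysh_hom: "\<forall>k. 0 \<le> p k \<Longrightarrow> 1 \<le> Ysh p (\<lambda>_. 0) b 1 (Suc m) \<and> Ysh p (\<lambda>_. 0) b 1 m \<le> Ysh p (\<lambda>_. 0) b 1 (Suc m)"
proof (induction m)
  case 0 then show ?case by simp
next
  case (Suc m)
  let ?V = "Ysh p (\<lambda>_. 0) b 1"
  have "?V (Suc (Suc m)) - ?V (Suc m) = p (b - m) * (?V (Suc m) - ?V m)"
    by (simp add: algebra_simps)
  moreover have "0 \<le> p (b - m) * (?V (Suc m) - ?V m)" using Suc by simp
  moreover have "1 \<le> ?V (Suc m) \<and> ?V m \<le> ?V (Suc m)" using Suc.IH[OF Suc.prems] .
  ultimately show ?case by linarith
qed

lemma solve_exists:
  assumes p: "\<forall>k. 0 \<le> p k"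
  shows "\<exists>y. (\<forall>k. k \<notin> {1..b} \<longrightarrow> y k = 0) \<and> (\<forall>i\<in>{1..b}. Aop p y i = - x i)"
proof -
  let ?V = "Ysh p (\<lambda>_. 0) b 1"
  have V: "1 \<le> ?V (Suc b)" using Ysh_hom[OF p, of b b] by simp
  define t where "t = - Ysh p x b 0 (Suc b) / ?V (Suc b)"
  have Yb: "Ysh p x b t (Suc b) = 0" using V unfolding t_def by (subst Ysh_lin) simp
  define y where "y i = (if i \<le> Suc b then Ysh p x b t (Suc b - i) else 0)" for i
  have "\<forall>k. k \<notin> {1..b} \<longrightarrow> y k = 0"
  proof (intro allI impI)
    fix k assume "k \<notin> {1..b}"
    hence "k = 0 \<or> k = Suc b \<or> k > Suc b" by auto
    then show "y k = 0" unfolding y_def using Yb by auto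
  qed
  moreover have "\<forall>i\<in>{1..b}. Aop p y i = - x i"
  proof
    fix i assume i: "i \<in> {1..b}"
    define m where "m = b - i"
    have e: "Suc b - (i - 1) = Suc (Suc m)" "Suc b - i = Suc m" "Suc b - Suc i = m" "b - m = i"
      using i unfolding m_def by auto
    have "y (i - 1) = Ysh p x b t (Suc (Suc m))" "y i = Ysh p x b t (Suc m)" "y (Suc i) = Ysh p x b t m"
      unfolding y_def using i e by auto
    then show "Aop p y i = - x i" unfolding Aop_def using e(4) by (simp add: algebra_simps)
  qed
  ultimately show ?thesis by blast
qed

lemma solve_unique:
  assumes p: "\<forall>k\<in>{1..b}. 0 \<le> p k"
    and y1: "\<forall>k. k \<notin> {1..b} \<longrightarrow> y1 k = 0" "\<forall>i\<in>{1..b}. Aop p y1 i = - x i"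
    and y2: "\<forall>k. k \<notin> {1..b} \<longrightarrow> y2 k = 0" "\<forall>i\<in>{1..b}. Aop p y2 i = - x i"
  shows "y1 = y2"
proof -
  have a: "\<forall>i\<in>{1..b}. 0 \<le> Aop p (\<lambda>i. 1 * y1 i + (-1) * y2 i) i"
    using y1 y2 by (simp only: Aop_lin) simp
  have b: "\<forall>i\<in>{1..b}. 0 \<le> Aop p (\<lambda>i. (-1) * y1 i + 1 * y2 i) i"
    using y1 y2 by (simp only: Aop_lin) simp
  have "\<forall>i\<in>{1..b}. 0 \<le> 1 * y1 i + (-1) * y2 i"
    by (rule comparison[OF p _ _ a]) (use y1 y2 in auto)
  moreover have "\<forall>i\<in>{1..b}. 0 \<le> (-1) * y1 i + 1 * y2 i"
    by (rule comparison[OF p _ _ b]) (use y1 y2 in auto)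
  ultimately have h: "\<forall>i\<in>{1..b}. y1 i = y2 i" by force
  show ?thesis
  proof
    fix k show "y1 k = y2 k" using h y1(1) y2(1) by (cases "k \<in> {1..b}") auto
  qed
qed

lemma solve_bound:
  assumes p: "\<forall>k\<in>{1..b}. 0 \<le> p k"
    and y: "y 0 = 0" "y (Suc b) = 0" "\<forall>i\<in>{1..b}. Aop p y i = - x i"
    and w: "w 0 = 0" "w (Suc b) = 0" "\<forall>i\<in>{1..b}. 1 \<le> Aop p w i"
    and X: "\<forall>i\<in>{1..b}. \<bar>x i\<bar> \<le> X"
  shows "\<forall>i\<in>{1..b}. \<bar>y i\<bar> \<le> X * w i"
proof -
  have X0: "0 \<le> X" if "1 \<le> b" using X that by force
  have a: "\<forall>i\<in>{1..b}. 0 \<le> Aop p (\<lambda>i. X * w i + (-1) * y i) i"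
  proof
    fix i assume i: "i \<in> {1..b}"
    have "X * 1 \<le> X * Aop p w i" using w i X0 by (intro mult_left_mono) auto
    moreover have "Aop p (\<lambda>i. X * w i + (-1) * y i) i = X * Aop p w i + (-1) * Aop p y i"
      by (rule Aop_lin)
    moreover have "x i \<le> X \<and> - x i \<le> X"
    proof -
      have "\<bar>x i\<bar> \<le> X" using X i by blast
      thus ?thesis by (simp only: abs_le_iff)
    qed
    moreover have "Aop p y i = - x i" using y(3) i by blast
    ultimately show "0 \<le> Aop p (\<lambda>i. X * w i + (-1) * y i) i"
      by linarith
  qed
  have b: "\<forall>i\<in>{1..b}. 0 \<le> Aop p (\<lambda>i. X * w i + 1 * y i) i"
  proof
    fix i assume i: "i \<in> {1..b}"
    have "X * 1 \<le> X * Aop p w i" using w i X0 by (intro mult_left_mono) auto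
    moreover have "Aop p (\<lambda>i. X * w i + 1 * y i) i = X * Aop p w i + 1 * Aop p y i"
      by (rule Aop_lin)
    moreover have "x i \<le> X \<and> - x i \<le> X"
    proof -
      have "\<bar>x i\<bar> \<le> X" using X i by blast
      thus ?thesis by (simp only: abs_le_iff)
    qed
    moreover have "Aop p y i = - x i" using y(3) i by blast
    ultimately show "0 \<le> Aop p (\<lambda>i. X * w i + 1 * y i) i"
      by linarith
  qed
  have "\<forall>i\<in>{1..b}. 0 \<le> X * w i + (-1) * y i"
    by (rule comparison[OF p _ _ a]) (use y w in auto)
  moreover have "\<forall>i\<in>{1..b}. 0 \<le> X * w i + 1 * y i"
    by (rule comparison[OF p _ _ b]) (use y w in auto)
  ultimately show ?thesis
  proof (intro ballI)
    fix i assume "\<forall>i\<in>{1..b}. 0 \<le> X * w i + (-1) * y i" "\<forall>i\<in>{1..b}. 0 \<le> X * w i + 1 * y i" "i \<in> {1..b}"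
    hence "0 \<le> X * w i + (-1) * y i" "0 \<le> X * w i + 1 * y i" by blast+
    hence "y i \<le> X * w i" "- y i \<le> X * w i" by linarith+
    thus "\<bar>y i\<bar> \<le> X * w i" by (simp only: abs_le_iff)
  qed
qed

lemma Jac_sum:
  assumes i: "i \<in> {1..b}" and y: "\<forall>k. k \<notin> {1..b} \<longrightarrow> y k = 0"
  shows "(\<Sum>j=1..b. Jac l b j i * y j) = - Aop (\<lambda>k. 2 * l * sstar l b k) y i"
proof -
  let ?s = "sstar l b"
  have "(\<Sum>j=1..b. Jac l b j i * y j) =
        (\<Sum>j=1..b. (if j = i then (- 2 * l * ?s i - 1) * y j else 0)
                 + (if j = i - 1 then y j else 0) + (if j = Suc i then 2 * l * ?s i * y j else 0))"
    by (rule sum.cong) (use i in \<open>auto simp: Jac_def\<close>)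
  also have "\<dots> = (- 2 * l * ?s i - 1) * y i + y (i - 1) + 2 * l * ?s i * y (Suc i)"
    using i y by (simp add: sum.distrib)
  finally show ?thesis unfolding Aop_def by (simp add: algebra_simps)
qed

lemma hessform_eq:
  assumes i: "i \<in> {1..b}" and x: "\<forall>k. k \<notin> {1..b} \<longrightarrow> x k = 0"
  shows "hessform l b x i = 2 * l * (x (i - 1))\<^sup>2 - 2 * l * (x i)\<^sup>2"
proof -
  have inner: "(\<Sum>k=1..b. x j * hess l i j k * x k) = x j * hess l i j j * x j" if j: "j \<in> {1..b}" for j
  proof -
    have "(\<Sum>k=1..b. x j * hess l i j k * x k) = (\<Sum>k=1..b. if k = j then x j * hess l i j j * x j else 0)"
      by (rule sum.cong) (auto simp: hess_def)
    then show ?thesis using j by simp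
  qed
  have "hessform l b x i = (\<Sum>j=1..b. x j * hess l i j j * x j)"
    unfolding hessform_def using i inner by simp
  also have "\<dots> = (\<Sum>j=1..b. (if j = i then - 2 * l * (x j)\<^sup>2 else 0) + (if j = i - 1 then 2 * l * (x j)\<^sup>2 else 0))"
    by (rule sum.cong) (use i in \<open>auto simp: hess_def power2_eq_square\<close>)
  also have "\<dots> = 2 * l * (x (i - 1))\<^sup>2 - 2 * l * (x i)\<^sup>2"
    using i x by (simp add: sum.distrib)
  finally show ?thesis .
qed



lemma X_pow:
  fixes X Nr e :: real and r :: nat
  assumes "0 \<le> X" "1 \<le> r" "1 \<le> Nr" "X ^ (2 * r) \<le> Nr powr (- e)"
  shows "X ^ 3 \<le> Nr powr (- (3 * e / (2 * real r)))"
proof (cases "X = 0")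
  case True then show ?thesis by simp
next
  case False
  hence Xp: "0 < X" using assms by simp
  have "X = (X powr real (2 * r)) powr (1 / real (2 * r))"
    using Xp assms(2) by (simp add: powr_powr)
  also have "\<dots> = (X ^ (2 * r)) powr (1 / real (2 * r))"
  proof -
    have pw: "X powr real (2 * r) = X ^ (2 * r)" using Xp by (rule powr_realpow)
    show ?thesis by (simp only: pw)
  qed
  also have "\<dots> \<le> (Nr powr (- e)) powr (1 / real (2 * r))"
    using assms Xp by (intro powr_mono2) auto
  also have "\<dots> = Nr powr (- e / real (2 * r))" by (simp add: powr_powr)
  finally have "X \<le> Nr powr (- e / real (2 * r))" .
  hence "X ^ 3 \<le> (Nr powr (- e / real (2 * r))) ^ 3" using Xp by (intro power_mono) auto
  also have "\<dots> = Nr powr (- e / real (2 * r) * 3)"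
    using assms(3) by (simp add: powr_realpow[symmetric] powr_powr)
  finally show ?thesis by (simp add: field_simps)
qed

lemma core_bound:
  fixes l :: real and B :: nat and s :: "nat \<Rightarrow> real"
  assumes l: "0 < l" "l < 1" and B: "1 \<le> B" and s: "s \<in> Sset B"
  defines "d \<equiv> (\<lambda>k. s k - sstar l B k)"
  shows "\<bar>dotb B (invJT l B d) (hessform l B d)\<bar> \<le> 4 * (normb B d) ^ 3 * real B ^ 2 / (1 - l)"
proof -
  let ?s = "sstar l B"
  have eq: "equilibrium l B ?s" using sstar_eq B l by auto
  have sS: "?s \<in> Sset B" and T: "\<forall>k\<in>{1..B}. Tq l B ?s k = 0"
    using eq eq_T B unfolding equilibrium_def by auto
  have s01: "0 \<le> ?s k \<and> ?s k \<le> 1" if "k \<in> {1..B}" for k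
    using Sset_nonneg[OF sS that] Sset_le1[OF sS that] by auto
  have sout: "?s k = 0" if "k \<notin> {1..B}" for k using sS that unfolding Sset_def by auto
  have sge: "0 \<le> ?s k" for k using s01 sout by (cases "k \<in> {1..B}") auto
  define t where "t k = l * ?s k" for k
  define p where "p k = 2 * l * ?s k" for k
  have pt: "p = (\<lambda>k. 2 * t k)" unfolding p_def t_def by (auto simp: algebra_simps)
  have p0: "\<forall>k. 0 \<le> p k" unfolding p_def using sge l by simp
  have t01: "\<forall>k\<in>{1..B}. 0 \<le> t k \<and> t k \<le> 1"
  proof
    fix k assume k: "k \<in> {1..B}"
    have "l * ?s k \<le> 1 * 1" using s01[OF k] l by (intro mult_mono) auto
    then show "0 \<le> t k \<and> t k \<le> 1" unfolding t_def using s01[OF k] l by simp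
  qed
  define t' where "t' k = l * sext B ?s k" for k
  have t'0: "t' 0 = l" unfolding t'_def sext_def by simp
  have t't: "t' k = t k" if "k \<in> {1..B}" for k using that unfolding t'_def t_def sext_def by auto
  have t'01: "\<forall>k\<in>{1..B}. 0 \<le> t' k \<and> t' k \<le> 1" using t01 t't by auto
  have t'rec: "\<forall>k\<in>{1..B}. t' k \<le> (t' (k - 1))\<^sup>2"
  proof
    fix k assume k: "k \<in> {1..B}"
    have "sext B ?s k = l * ((sext B ?s (k - 1))\<^sup>2 - (sext B ?s B)\<^sup>2)"
      using T k unfolding Tq_def by auto
    hence "sext B ?s k \<le> l * (sext B ?s (k - 1))\<^sup>2" using l
      by (smt (verit, best) mult_left_mono zero_le_power2)
    hence "l * sext B ?s k \<le> l * (l * (sext B ?s (k - 1))\<^sup>2)" using l by (intro mult_left_mono) auto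
    then show "t' k \<le> (t' (k - 1))\<^sup>2" unfolding t'_def by (simp add: power2_eq_square algebra_simps)
  qed
  have "(1 - l\<^sup>2) * (\<Prod>k\<in>{1..B}. (1 + t' k)) \<le> 1 - (t' B)\<^sup>2"
    by (rule Qbound[OF t'01 t'0 t'rec])
  moreover have "(\<Prod>k\<in>{1..B}. (1 + t' k)) = (\<Prod>k\<in>{1..B}. (1 + t k))"
    using t't by (intro prod.cong) auto
  ultimately have "(1 - l\<^sup>2) * (\<Prod>k\<in>{1..B}. (1 + t k)) \<le> 1" by (smt (verit) zero_le_power2)
  moreover have "1 - l \<le> 1 - l\<^sup>2" using l by (simp add: power2_eq_square mult_left_le)
  moreover have "0 \<le> (\<Prod>k\<in>{1..B}. (1 + t k))" using t01 by (intro prod_nonneg) auto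
  ultimately have "(1 - l) * (\<Prod>k\<in>{1..B}. (1 + t k)) \<le> 1"
    by (smt (verit) mult_right_mono)
  hence Qb: "(\<Prod>k\<in>{1..B}. (1 + t k)) \<le> 1 / (1 - l)" using l by (simp add: field_simps)
  define Q where "Q = (\<lambda>i. \<Prod>k\<in>{i..B}. (1 + t k))"
  define Dl where "Dl = (\<lambda>i. real (Suc B - i) * Q i)"
  define w where "w = (\<lambda>i. if i \<in> {1..B} then (\<Sum>m\<in>{1..i}. Dl m) else 0)"
  have sup: "\<forall>i\<in>{1..B}. 1 \<le> Aop (\<lambda>k. 2 * t k) w i" "\<forall>i. 0 \<le> w i"
    "\<forall>i. w i \<le> real B ^ 2 * Q 1" "w 0 = 0" "w (Suc B) = 0"
    unfolding w_def Dl_def Q_def by (rule supersol[OF t01])+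
  have dout: "\<forall>k. k \<notin> {1..B} \<longrightarrow> d k = 0" using s sout unfolding d_def Sset_def by auto
  define X where "X = normb B d"
  have S0: "0 \<le> (\<Sum>k=1..B. (d k)\<^sup>2)" by (intro sum_nonneg) simp
  have X0: "0 \<le> X" unfolding X_def normb_def using S0 by simp
  have dX: "\<forall>i\<in>{1..B}. \<bar>d i\<bar> \<le> X"
  proof
    fix i assume i: "i \<in> {1..B}"
    have "(d i)\<^sup>2 \<le> (\<Sum>k=1..B. (d k)\<^sup>2)" using i by (intro member_le_sum) auto
    hence "sqrt ((d i)\<^sup>2) \<le> X" unfolding X_def normb_def by (rule real_sqrt_le_mono)
    then show "\<bar>d i\<bar> \<le> X" by simp
  qed
  have X2: "X\<^sup>2 = (\<Sum>k=1..B. (d k)\<^sup>2)" unfolding X_def normb_def by (rule real_sqrt_pow2[OF S0])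
  define P where "P = (\<lambda>y. (\<forall>k. k \<notin> {1..B} \<longrightarrow> y k = 0) \<and>
        (\<forall>i\<in>{1..B}. (\<Sum>j=1..B. Jac l B j i * y j) = d i))"
  obtain y0 where y0: "\<forall>k. k \<notin> {1..B} \<longrightarrow> y0 k = 0" "\<forall>i\<in>{1..B}. Aop p y0 i = - d i"
    using solve_exists[OF p0] by blast
  have Pequiv: "P y \<longleftrightarrow> (\<forall>k. k \<notin> {1..B} \<longrightarrow> y k = 0) \<and> (\<forall>i\<in>{1..B}. Aop p y i = - d i)" for y
  proof -
    have pf: "(\<lambda>k. 2 * l * ?s k) = p" by (rule ext) (simp add: p_def)
    have js: "(\<Sum>j=1..B. Jac l B j i * y j) = - Aop p y i"
      if i: "i \<in> {1..B}" and z: "\<forall>k. k \<notin> {1..B} \<longrightarrow> y k = 0" for i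
      using Jac_sum[OF i z, of l] unfolding pf .
    show ?thesis
    proof
      assume "P y"
      hence z: "\<forall>k. k \<notin> {1..B} \<longrightarrow> y k = 0" and r: "\<forall>i\<in>{1..B}. (\<Sum>j=1..B. Jac l B j i * y j) = d i"
        unfolding P_def by blast+
      have "\<forall>i\<in>{1..B}. Aop p y i = - d i"
      proof
        fix i assume i: "i \<in> {1..B}"
        show "Aop p y i = - d i" using js[OF i z] r i by simp
      qed
      then show "(\<forall>k. k \<notin> {1..B} \<longrightarrow> y k = 0) \<and> (\<forall>i\<in>{1..B}. Aop p y i = - d i)" using z by blast
    next
      assume h: "(\<forall>k. k \<notin> {1..B} \<longrightarrow> y k = 0) \<and> (\<forall>i\<in>{1..B}. Aop p y i = - d i)"
      hence z: "\<forall>k. k \<notin> {1..B} \<longrightarrow> y k = 0" and r: "\<forall>i\<in>{1..B}. Aop p y i = - d i" by blast+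
      have "\<forall>i\<in>{1..B}. (\<Sum>j=1..B. Jac l B j i * y j) = d i"
      proof
        fix i assume i: "i \<in> {1..B}"
        show "(\<Sum>j=1..B. Jac l B j i * y j) = d i" using js[OF i z] r i by simp
      qed
      then show "P y" unfolding P_def using z by blast
    qed
  qed
  have "P y0" using Pequiv y0 by blast
  moreover have "y = y0" if "P y" for y
    using solve_unique[of B p y d y0] p0 y0 that Pequiv by blast
  ultimately have inv: "invJT l B d = y0" unfolding invJT_def P_def[symmetric] by (rule the_equality)
  have ybd: "\<forall>i\<in>{1..B}. \<bar>y0 i\<bar> \<le> X * w i"
  proof -
    have wA: "\<forall>i\<in>{1..B}. 1 \<le> Aop p w i" using sup(1) unfolding pt .
    have p1: "\<forall>k\<in>{1..B}. 0 \<le> p k" using p0 by blast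
    have yb: "y0 0 = 0" "y0 (Suc B) = 0" using y0(1) by auto
    show ?thesis by (rule solve_bound[OF p1 yb y0(2) sup(4) sup(5) wA dX])
  qed
  define M where "M = X * (real B ^ 2 / (1 - l))"
  have yM: "\<bar>y0 i\<bar> \<le> M" if i: "i \<in> {1..B}" for i
  proof -
    have "w i \<le> real B ^ 2 * Q 1" using sup by blast
    also have "\<dots> \<le> real B ^ 2 * (1 / (1 - l))" using Qb unfolding Q_def by (intro mult_left_mono) auto
    finally have "X * w i \<le> X * (real B ^ 2 / (1 - l))" using X0 by (intro mult_left_mono) auto
    then show ?thesis using ybd i unfolding M_def by force
  qed
  have Hb: "\<bar>hessform l B d i\<bar> \<le> 2 * ((d (i - 1))\<^sup>2 + (d i)\<^sup>2)" if i: "i \<in> {1..B}" for i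
  proof -
    have "hessform l B d i = 2 * l * ((d (i - 1))\<^sup>2 - (d i)\<^sup>2)"
      using hessform_eq[OF i dout] by (simp add: algebra_simps)
    hence "\<bar>hessform l B d i\<bar> = 2 * l * \<bar>(d (i - 1))\<^sup>2 - (d i)\<^sup>2\<bar>" using l by (simp add: abs_mult)
    also have "\<dots> \<le> 2 * 1 * ((d (i - 1))\<^sup>2 + (d i)\<^sup>2)"
    proof (intro mult_mono)
      have "0 \<le> (d (i - 1))\<^sup>2" "0 \<le> (d i)\<^sup>2" by simp_all
      thus "\<bar>(d (i - 1))\<^sup>2 - (d i)\<^sup>2\<bar> \<le> (d (i - 1))\<^sup>2 + (d i)\<^sup>2" by (simp only: abs_le_iff) linarith
    qed (use l in auto)
    finally show ?thesis by simp
  qed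
  have shift: "(\<Sum>i=1..B. (d (i - 1))\<^sup>2) \<le> (\<Sum>k=1..B. (d k)\<^sup>2)"
  proof -
    have "(\<Sum>i=1..B. (d (i - 1))\<^sup>2) = (\<Sum>i=0..B-1. (d i)\<^sup>2)"
      using B sum.shift_bounds_cl_Suc_ivl[of "\<lambda>i. (d (i - 1))\<^sup>2" 0 "B - 1"] by simp
    also have "\<dots> \<le> (\<Sum>i=0..B. (d i)\<^sup>2)" by (intro sum_mono2) auto
    also have "\<dots> = (d 0)\<^sup>2 + (\<Sum>k=1..B. (d k)\<^sup>2)" by (simp add: sum.atLeast_Suc_atMost)
    also have "\<dots> = (\<Sum>k=1..B. (d k)\<^sup>2)" using dout by simp
    finally show ?thesis .
  qed
  have Hsum: "(\<Sum>i=1..B. \<bar>hessform l B d i\<bar>) \<le> 4 * X\<^sup>2"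
  proof -
    have "(\<Sum>i=1..B. \<bar>hessform l B d i\<bar>) \<le> (\<Sum>i=1..B. 2 * ((d (i - 1))\<^sup>2 + (d i)\<^sup>2))"
      using Hb by (intro sum_mono) auto
    also have "\<dots> = 2 * (\<Sum>i=1..B. (d (i - 1))\<^sup>2) + 2 * (\<Sum>k=1..B. (d k)\<^sup>2)"
      by (simp add: sum.distrib sum_distrib_left)
    also have "\<dots> \<le> 4 * X\<^sup>2" using shift X2 by simp
    finally show ?thesis .
  qed
  have "\<bar>dotb B y0 (hessform l B d)\<bar> \<le> (\<Sum>i=1..B. \<bar>y0 i\<bar> * \<bar>hessform l B d i\<bar>)"
    unfolding dotb_def by (rule order_trans[OF sum_abs]) (simp add: abs_mult)
  also have "\<dots> \<le> (\<Sum>i=1..B. M * \<bar>hessform l B d i\<bar>)"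
    using yM by (intro sum_mono mult_right_mono) auto
  also have "\<dots> = M * (\<Sum>i=1..B. \<bar>hessform l B d i\<bar>)" by (simp add: sum_distrib_left)
  also have "\<dots> \<le> M * (4 * X\<^sup>2)"
    using Hsum X0 l unfolding M_def by (intro mult_left_mono) auto
  also have "\<dots> = 4 * X ^ 3 * real B ^ 2 / (1 - l)"
    unfolding M_def by (simp add: power2_eq_square power3_eq_cube)
  finally show ?thesis using inv unfolding X_def by simp
qed



theorem lemma9:
  fixes \<gamma> \<alpha> \<epsilon> \<xi> :: real and r :: nat and b :: "nat \<Rightarrow> nat"
  assumes "0 < \<gamma>" "\<gamma> \<le> 1" "0 < \<alpha>" "\<alpha> < 1/4" "1 \<le> r" "0 < \<epsilon>" "0 < \<xi>"
    and "\<forall>N. 1 \<le> b N"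
    and "(\<lambda>N. real (b N)) \<in> O(\<lambda>N. ln (real N))"
  shows "\<exists>C>0. \<exists>N0::nat. \<forall>N\<ge>N0. \<forall>s \<in> Sset (b N).
     let l = lam \<gamma> \<alpha> N; d = (\<lambda>k. s k - sstar l (b N) k) in
       normb (b N) d ^ (2 * r) \<le> real N powr (- \<epsilon>) \<longrightarrow>
       \<bar>dotb (b N) (invJT l (b N) d) (hessform l (b N) d)\<bar>
         \<le> C / real N powr (3 * \<epsilon> / (2 * real r) - 2 * \<alpha> - 3 * \<xi>)"
proof -
  obtain N1 where N1: "\<forall>N\<ge>N1. real (b N) ^ 2 \<le> real N powr (\<alpha> + 3 * \<xi>)"
    using asym_b[OF assms(9), of "\<alpha> + 3 * \<xi>"] assms by auto
  show ?thesis
  proof (intro exI[of _ "4 / \<gamma>"] conjI exI[of _ "max N1 2"] allI impI ballI)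
    show "0 < 4 / \<gamma>" using assms by simp
    fix N s assume N: "max N1 2 \<le> N" and s: "s \<in> Sset (b N)"
    define l where "l = lam \<gamma> \<alpha> N"
    define d where "d = (\<lambda>k. s k - sstar l (b N) k)"
    define E where "E = 3 * \<epsilon> / (2 * real r) - 2 * \<alpha> - 3 * \<xi>"
    have Nr: "1 < real N" using N by simp
    have N0: "N \<noteq> 0" using N by simp
    have Na: "1 < real N powr \<alpha>" using powr_less_mono[OF assms(3) Nr] N0 by simp
    have "\<gamma> < real N powr \<alpha>" using Na assms(2) by linarith
    hence g: "\<gamma> / real N powr \<alpha> < 1" using Na by (simp add: divide_less_eq)
    have g0: "0 < \<gamma> / real N powr \<alpha>" using Na assms(1) N0 by (intro divide_pos_pos) auto
    have l01: "0 < l" "l < 1" unfolding l_def lam_def using g g0 by auto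
    have ol: "1 / (1 - l) = real N powr \<alpha> / \<gamma>" unfolding l_def lam_def using Na assms N0 by simp
    have Bb: "real (b N) ^ 2 \<le> real N powr (\<alpha> + 3 * \<xi>)" using N1 N by simp
    have cb: "\<bar>dotb (b N) (invJT l (b N) d) (hessform l (b N) d)\<bar> \<le> 4 * (normb (b N) d) ^ 3 * real (b N) ^ 2 / (1 - l)"
      unfolding d_def by (rule core_bound[OF l01 _ s]) (use assms in auto)
    show "let l = lam \<gamma> \<alpha> N; d = (\<lambda>k. s k - sstar l (b N) k) in
       normb (b N) d ^ (2 * r) \<le> real N powr (- \<epsilon>) \<longrightarrow>
       \<bar>dotb (b N) (invJT l (b N) d) (hessform l (b N) d)\<bar>
         \<le> 4 / \<gamma> / real N powr (3 * \<epsilon> / (2 * real r) - 2 * \<alpha> - 3 * \<xi>)"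
      unfolding Let_def l_def[symmetric] d_def[symmetric] E_def[symmetric]
    proof
      assume h: "normb (b N) d ^ (2 * r) \<le> real N powr (- \<epsilon>)"
      have X0: "0 \<le> normb (b N) d" unfolding normb_def by (simp add: sum_nonneg)
      have X3: "normb (b N) d ^ 3 \<le> real N powr (- (3 * \<epsilon> / (2 * real r)))"
        using X_pow[OF X0 assms(5) _ h] Nr by simp
      have "4 * (normb (b N) d) ^ 3 * real (b N) ^ 2 / (1 - l)
          = 4 * (normb (b N) d) ^ 3 * real (b N) ^ 2 * (1 / (1 - l))" by simp
      also have "\<dots> \<le> 4 * real N powr (- (3 * \<epsilon> / (2 * real r))) * real N powr (\<alpha> + 3 * \<xi>) * (real N powr \<alpha> / \<gamma>)"
        unfolding ol using X3 Bb X0 assms(1)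
        by (intro mult_mono mult_nonneg_nonneg) auto
      also have "\<dots> = 4 / \<gamma> * (real N powr (- (3 * \<epsilon> / (2 * real r))) * real N powr (\<alpha> + 3 * \<xi>) * real N powr \<alpha>)"
        by simp
      also have "\<dots> = 4 / \<gamma> * real N powr (- E)"
        unfolding E_def powr_add[symmetric] by (simp add: algebra_simps)
      also have "\<dots> = 4 / \<gamma> / real N powr E" by (simp add: powr_minus_divide)
      finally show "\<bar>dotb (b N) (invJT l (b N) d) (hessform l (b N) d)\<bar> \<le> 4 / \<gamma> / real N powr E"
        using cb by linarith
    qed
  qed
qed


end
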